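(* Let $D\subset\mathbb N^n$ be finite, not contained in any coordinate hyperplane, $p$ a prime, and $\mathbf e,\mathbf e'\in\Sigma_p(D)$ with $V(\mathbf e,\mathbf e')\ne\emptyset$. Then all $V=(v_{\mathbf d})\in V(\mathbf e,\mathbf e')$ have the same weight $w(V)=\sum_{\mathbf d}v_{\mathbf d}$.
   Context: $s_p$ = base-$p$ digit sum. $E_{D,p}(r)$ = set of $U=(u_{\mathbf d})\in\{0,\dots,p^r-1\}^D$ with $\sum u_{\mathbf d}\mathbf d\equiv0\pmod{p^r-1}$ and all coordinates of $\sum u_{\mathbf d}\mathbf d$ positive; $s_p(U)=\sum s_p(u_{\mathbf d})$; $\delta_p(D)=\frac1{p-1}\min_{r\ge1}\min_{U\in E_{D,p}(r)}s_p(U)/r$; minimal means $s_p(U)=(p-1)r\delta_p(D)$. Shift $\delta_r$: $k\mapsto pk\bmod(p^r-1)$ for $k\le p^r-2$, $p^r-1\mapsto p^r-1$, coordinatewise. $\varphi_U(k)=\frac1{p^r-1}\sum\mathbf d(\delta_r^kU)_{\mathbf d}$, $k\in\mathbb Z/r\mathbb Z$; irreducible means $\varphi_U$ injective; $MI_{D,p}$ = minimal irreducible elements of all lengths; $\Sigma_p(D)=\bigcup_{U\in MI_{D,p}}\mathrm{Im}\varphi_U$. $\psi(U)=(u_{\mathbf d}\bmod p)_{\mathbf d}$; $V(\mathbf e,\mathbf e')=\{\psi(U):U\in MI_{D,p},\varphi_U(-1)=\mathbf e,\varphi_U(0)=\mathbf e'\}\subset\{0,\dots,p-1\}^D$. 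*)

theory Defs
  imports Complex_Main "HOL-Computational_Algebra.Primes"
begin

text \<open>Vectors in N^n are functions nat => nat vanishing at indices >= n.
  A tuple U indexed by D is a function (nat => nat) => nat vanishing outside D.\<close>

definition digsum :: "nat \<Rightarrow> nat \<Rightarrow> nat" where
  "digsum p k = (\<Sum>i\<le>k. (k div p ^ i) mod p)"

definition sp :: "nat \<Rightarrow> (nat \<Rightarrow> nat) set \<Rightarrow> ((nat \<Rightarrow> nat) \<Rightarrow> nat) \<Rightarrow> nat" where
  "sp p D U = (\<Sum>d\<in>D. digsum p (U d))"

definition vsum :: "(nat \<Rightarrow> nat) set \<Rightarrow> ((nat \<Rightarrow> nat) \<Rightarrow> nat) \<Rightarrow> nat \<Rightarrow> nat" where
  "vsum D U = (\<lambda>i. \<Sum>d\<in>D. U d * d i)"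

definition inE :: "nat \<Rightarrow> (nat \<Rightarrow> nat) set \<Rightarrow> nat \<Rightarrow> nat \<Rightarrow> ((nat \<Rightarrow> nat) \<Rightarrow> nat) \<Rightarrow> bool" where
  "inE n D p r U \<longleftrightarrow> r \<ge> 1 \<and> (\<forall>d\<in>D. U d \<le> p ^ r - 1) \<and> (\<forall>d. d \<notin> D \<longrightarrow> U d = 0)
     \<and> (\<forall>i<n. (p ^ r - 1) dvd vsum D U i \<and> vsum D U i > 0)"

definition delta :: "nat \<Rightarrow> (nat \<Rightarrow> nat) set \<Rightarrow> nat \<Rightarrow> real" where
  "delta n D p = Inf {real (sp p D U) / real r | r U. inE n D p r U} / real (p - 1)"

definition minimal :: "nat \<Rightarrow> (nat \<Rightarrow> nat) set \<Rightarrow> nat \<Rightarrow> nat \<Rightarrow> ((nat \<Rightarrow> nat) \<Rightarrow> nat) \<Rightarrow> bool" where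
  "minimal n D p r U \<longleftrightarrow> inE n D p r U \<and>
     real (sp p D U) = real (p - 1) * real r * delta n D p"

definition shift :: "nat \<Rightarrow> nat \<Rightarrow> nat \<Rightarrow> nat" where
  "shift p r k = (if k \<le> p ^ r - 2 then (p * k) mod (p ^ r - 1) else k)"

definition shiftU :: "nat \<Rightarrow> nat \<Rightarrow> ((nat \<Rightarrow> nat) \<Rightarrow> nat) \<Rightarrow> ((nat \<Rightarrow> nat) \<Rightarrow> nat)" where
  "shiftU p r U = (\<lambda>d. shift p r (U d))"

text \<open>phi_U(k) for k in Z/rZ, represented by k mod r.\<close>
definition phi :: "(nat \<Rightarrow> nat) set \<Rightarrow> nat \<Rightarrow> nat \<Rightarrow> ((nat \<Rightarrow> nat) \<Rightarrow> nat) \<Rightarrow> nat \<Rightarrow> (nat \<Rightarrow> nat)" where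
  "phi D p r U k = (\<lambda>i. vsum D ((shiftU p r ^^ (k mod r)) U) i div (p ^ r - 1))"

definition irreducible_el :: "(nat \<Rightarrow> nat) set \<Rightarrow> nat \<Rightarrow> nat \<Rightarrow> ((nat \<Rightarrow> nat) \<Rightarrow> nat) \<Rightarrow> bool" where
  "irreducible_el D p r U \<longleftrightarrow> inj_on (phi D p r U) {..<r}"

definition MI :: "nat \<Rightarrow> (nat \<Rightarrow> nat) set \<Rightarrow> nat \<Rightarrow> (nat \<times> ((nat \<Rightarrow> nat) \<Rightarrow> nat)) set" where
  "MI n D p = {(r, U). minimal n D p r U \<and> irreducible_el D p r U}"

definition Sigma_p :: "nat \<Rightarrow> (nat \<Rightarrow> nat) set \<Rightarrow> nat \<Rightarrow> (nat \<Rightarrow> nat) set" where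
  "Sigma_p n D p = (\<Union>(r, U)\<in>MI n D p. phi D p r U ` {..<r})"

definition psi :: "nat \<Rightarrow> ((nat \<Rightarrow> nat) \<Rightarrow> nat) \<Rightarrow> ((nat \<Rightarrow> nat) \<Rightarrow> nat)" where
  "psi p U = (\<lambda>d. U d mod p)"

text \<open>phi_U(-1) is phi_U(r-1) since k ranges over Z/rZ.\<close>
definition Vset :: "nat \<Rightarrow> (nat \<Rightarrow> nat) set \<Rightarrow> nat \<Rightarrow> (nat \<Rightarrow> nat) \<Rightarrow> (nat \<Rightarrow> nat)
     \<Rightarrow> ((nat \<Rightarrow> nat) \<Rightarrow> nat) set" where
  "Vset n D p e e' = {psi p U | r U. (r, U) \<in> MI n D p \<and> phi D p r U (r - 1) = e \<and> phi D p r U 0 = e'}"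

definition weight :: "(nat \<Rightarrow> nat) set \<Rightarrow> ((nat \<Rightarrow> nat) \<Rightarrow> nat) \<Rightarrow> nat" where
  "weight D V = (\<Sum>d\<in>D. V d)"

end

theory Submission
  imports Defs
begin

lemma digsum_ext:
  assumes p: "p \<ge> 2" and N: "N \<ge> k"
  shows "(\<Sum>i\<le>N. (k div p^i) mod p) = digsum p k"
proof -
  have z: "(k div p^i) mod p = 0" if "i > k" for i
  proof -
    have "k < i" using that .
    also have "i < 2^i" by (rule less_exp)
    also have "2^i \<le> p^i" using p by (simp add: power_mono)
    finally show ?thesis by simp
  qed
  have "{..N} = {..k} \<union> {k<..N}" using N by auto
  hence "(\<Sum>i\<le>N. (k div p^i) mod p) = (\<Sum>i\<le>k. (k div p^i) mod p) + (\<Sum>i\<in>{k<..N}. (k div p^i) mod p)"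
    by (simp add: sum.union_disjoint ivl_disj_int)
  also have "(\<Sum>i\<in>{k<..N}. (k div p^i) mod p) = 0" using z by simp
  finally show ?thesis by (simp add: digsum_def)
qed

lemma digsum_step:
  assumes p: "p \<ge> 2"
  shows "digsum p k = k mod p + digsum p (k div p)"
proof (cases k)
  case 0
  then show ?thesis by (simp add: digsum_def)
next
  case (Suc m)
  have "digsum p k = (\<Sum>i\<le>Suc m. (k div p^i) mod p)" by (simp add: digsum_def Suc)
  also have "\<dots> = k mod p + (\<Sum>i\<le>m. (k div p^Suc i) mod p)"
    using sum.atMost_Suc_shift[of "\<lambda>i. (k div p^i) mod p" m] by simp
  also have "(\<Sum>i\<le>m. (k div p^Suc i) mod p) = (\<Sum>i\<le>m. ((k div p) div p^i) mod p)"
    by (simp add: div_mult2_eq)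
  also have "\<dots> = digsum p (k div p)"
  proof (rule digsum_ext[OF p])
    have "k div p < k" using p Suc by simp
    thus "k div p \<le> m" using Suc by simp
  qed
  finally show ?thesis .
qed

lemma digsum_pq:
  assumes p: "p \<ge> 2" and a: "a < p"
  shows "digsum p (p*q + a) = digsum p q + a"
  using digsum_step[OF p, of "p*q+a"] p a by simp

lemma pr2: fixes p r :: nat assumes p: "p \<ge> 2" and r: "r \<ge> 1" shows "p^r \<ge> 2"
proof -
  have "p^1 \<le> p^r" using r p by (intro power_increasing) auto
  thus ?thesis using p by simp
qed

lemma shift_pow:
  assumes p: "p \<ge> 2" and r: "r \<ge> 1" and x: "x \<le> p^r - 1"
  shows "(shift p r ^^ j) x = (if x = p^r - 1 then x else p^j * x mod (p^r - 1))"
proof (induction j)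
  case 0
  then show ?case using x by auto
next
  case (Suc j)
  have pr: "p^r \<ge> 2" using pr2[OF p r] .
  show ?case
  proof (cases "x = p^r - 1")
    case True
    then show ?thesis using Suc pr by (simp add: shift_def)
  next
    case False
    have lt: "p^j * x mod (p^r - 1) < p^r - 1" using pr by simp
    hence "p^j * x mod (p^r - 1) \<le> p^r - 2" by linarith
    hence "shift p r (p^j * x mod (p^r - 1)) = p * (p^j * x mod (p^r - 1)) mod (p^r - 1)"
      by (simp add: shift_def)
    also have "\<dots> = p^Suc j * x mod (p^r - 1)"
      by (simp add: mod_mult_right_eq mult.assoc)
    finally show ?thesis using Suc False by simp
  qed
qed

lemma shift_pow_le:
  assumes p: "p \<ge> 2" and r: "r \<ge> 1" and x: "x \<le> p^r - 1"
  shows "(shift p r ^^ j) x \<le> p^r - 1"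
proof -
  have pr: "p^r \<ge> 2" using pr2[OF p r] .
  show ?thesis using shift_pow[OF assms, of j] x pr
    by (simp add: less_imp_le)
qed

lemma shift_r:
  assumes p: "p \<ge> 2" and r: "r \<ge> 1" and x: "x \<le> p^r - 1"
  shows "(shift p r ^^ r) x = x"
proof -
  have pr: "p^r \<ge> 2" using pr2[OF p r] .
  show ?thesis
  proof (cases "x = p^r - 1")
    case True
    then show ?thesis using shift_pow[OF assms, of r] by simp
  next
    case False
    hence xl: "x < p^r - 1" using x by simp
    have "p^r * x = (p^r - 1) * x + x" using pr by (simp add: algebra_simps)
    hence "p^r * x mod (p^r - 1) = x mod (p^r - 1)" by simp
    also have "\<dots> = x" using xl by simp
    finally show ?thesis using shift_pow[OF assms, of r] False by simp
  qed
qed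

lemma shift_digit:
  assumes p: "p \<ge> 2" and r: "r \<ge> 1" and y: "y \<le> p^r - 1"
  shows "p * y = shift p r y + (p^r - 1) * (shift p r y mod p)"
proof -
  have pr: "p^r \<ge> 2" using pr2[OF p r] .
  obtain s where rs: "r = Suc s" using r by (cases r) auto
  have pP: "p^r = p * p^s" using rs by simp
  have Mmod: "(p^r - 1) mod p = p - 1"
  proof -
    obtain q where q: "p = Suc q" using p by (cases p) auto
    have "p^s \<ge> 1" using p by simp
    then obtain t where t: "p^s = Suc t" by (cases "p^s") auto
    have h: "p^r - 1 = q + p * t" using pP t q by simp
    have "(q + p * t) mod p = q mod p" by (rule mod_mult_self2)
    also have "q mod p = q" using q by simp
    finally have c: "(q + p * t) mod p = q" .
    have d: "p - 1 = q" using q by simp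
    show ?thesis by (simp only: h c d)
  qed
  show ?thesis
  proof (cases "y = p^r - 1")
    case True
    hence "shift p r y = p^r - 1" by (simp add: shift_def)
    moreover obtain q where "p = Suc q" using p by (cases p) auto
    ultimately show ?thesis using True Mmod by (simp add: algebra_simps)
  next
    case False
    hence yl: "y < p^r - 1" using y by simp
    hence "y \<le> p^r - 2" using pr by linarith
    hence sh: "shift p r y = p * y mod (p^r - 1)" by (simp add: shift_def)
    define c where "c = p * y div (p^r - 1)"
    define x where "x = p * y mod (p^r - 1)"
    have eq: "p * y = x + (p^r - 1) * c" unfolding x_def c_def by simp
    have "p * y < p * (p^r - 1)" using yl p by simp
    hence cl: "c < p" unfolding c_def using pr
      by (simp add: div_less_iff_less_mult mult.commute)
    have P1: "p^r = (p^r - 1) + 1" using pr by simp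
    have "x + p^r * c = x + (p^r - 1) * c + c"
      by (subst P1) (simp add: distrib_right)
    hence e2: "x + p^r * c = p * y + c" using eq by simp
    have "(p * y + c) mod p = c mod p" by simp
    hence "(x + p^r * c) mod p = c" using e2 cl by simp
    moreover have "(x + p^r * c) mod p = x mod p" unfolding pP
      by (simp add: mult.assoc)
    ultimately have xm: "x mod p = c" by simp
    have sx: "shift p r y = x" using sh unfolding x_def .
    show ?thesis by (simp only: sx xm) (rule eq)
  qed
qed


lemma Mmod_lemma:
  fixes p :: nat
  assumes p: "p \<ge> 2" and r: "r \<ge> 1"
  shows "(p^r - 1) mod p = p - 1"
proof -
  obtain s where rs: "r = Suc s" using r by (cases r) auto
  have pP: "p^r = p * p^s" using rs by simp
  obtain q where q: "p = Suc q" using p by (cases p) auto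
  have "p^s \<ge> 1" using p by simp
  then obtain t where t: "p^s = Suc t" by (cases "p^s") auto
  have h: "p^r - 1 = q + p * t" using pP t q by simp
  have "(q + p * t) mod p = q mod p" by (rule mod_mult_self2)
  also have "q mod p = q" using q by simp
  finally have c: "(q + p * t) mod p = q" .
  have d: "p - 1 = q" using q by simp
  show ?thesis by (simp only: h c d)
qed

lemma shiftU_pow: "(shiftU p r ^^ j) U = (\<lambda>d. (shift p r ^^ j) (U d))"
  by (induction j) (auto simp: shiftU_def)

lemma min_le:
  assumes m: "minimal n D p r U" and e: "inE n D p r U'" and p: "prime p"
  shows "sp p D U \<le> sp p D U'"
proof -
  define S where "S = {real (sp p D U) / real r | r U. inE n D p r U}"
  have mem: "real (sp p D U') / real r \<in> S" unfolding S_def mem_Collect_eq using e by blast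
  have bdd: "bdd_below S" unfolding S_def by (rule bdd_belowI[of _ 0]) auto
  have I: "Inf S \<le> real (sp p D U') / real r" by (rule cInf_lower[OF mem bdd])
  have p2: "p \<ge> 2" using p prime_ge_2_nat by blast
  have r1: "r \<ge> 1" using e by (simp add: inE_def)
  have dS: "delta n D p = Inf S / real (p - 1)" unfolding delta_def S_def ..
  have pp: "real (p - 1) > 0" using p2 by simp
  have "real (sp p D U) = real (p - 1) * real r * delta n D p" using m by (simp add: minimal_def)
  also have "\<dots> = real r * Inf S" unfolding dS using pp by simp
  also have "\<dots> \<le> real r * (real (sp p D U') / real r)"
    by (intro mult_left_mono I) simp
  also have "\<dots> = real (sp p D U')" using r1 by simp
  finally show ?thesis by simp
qed

lemma psi_rel:
  assumes mi: "(r, U) \<in> MI n D p" and p: "prime p" and i: "i < n"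
  shows "vsum D (psi p U) i + phi D p r U 0 i = p * phi D p r U (r - 1) i"
proof -
  have e: "inE n D p r U" using mi by (simp add: MI_def minimal_def)
  have p2: "p \<ge> 2" using p prime_ge_2_nat by blast
  have r1: "r \<ge> 1" and Ule: "\<And>d. d \<in> D \<Longrightarrow> U d \<le> p^r - 1"
    and dv: "(p^r - 1) dvd vsum D U i" using e i by (auto simp: inE_def)
  define M where "M = p^r - 1"
  have pr: "p^r \<ge> 2" using pr2[OF p2 r1] .
  have M0: "M > 0" using pr M_def by simp
  define W where "W = (\<lambda>d. (shift p r ^^ (r - 1)) (U d))"
  have WU: "(shiftU p r ^^ (r - 1)) U = W" unfolding W_def shiftU_pow ..
  have key: "p * W d = U d + M * (U d mod p)" if d: "d \<in> D" for d
  proof -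
    have Wl: "W d \<le> p^r - 1" unfolding W_def using shift_pow_le[OF p2 r1 Ule[OF d]] .
    have "shift p r (W d) = (shift p r ^^ Suc (r - 1)) (U d)" unfolding W_def by simp
    also have "\<dots> = U d" using r1 shift_r[OF p2 r1 Ule[OF d]] by simp
    finally have sw: "shift p r (W d) = U d" .
    show ?thesis using shift_digit[OF p2 r1 Wl] sw M_def by simp
  qed
  have sumeq: "p * vsum D W i = vsum D U i + M * vsum D (psi p U) i"
  proof -
    have "p * vsum D W i = (\<Sum>d\<in>D. (p * W d) * d i)"
      unfolding vsum_def by (simp add: sum_distrib_left mult.assoc)
    also have "\<dots> = (\<Sum>d\<in>D. (U d + M * (U d mod p)) * d i)"
      by (rule sum.cong) (auto simp: key)
    also have "\<dots> = vsum D U i + M * vsum D (psi p U) i"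
      unfolding vsum_def psi_def
      by (simp add: sum_distrib_left sum.distrib algebra_simps)
    finally show ?thesis .
  qed
  have ndv: "\<not> p dvd M" using Mmod_lemma[OF p2 r1] p2 unfolding M_def
    by (simp add: dvd_eq_mod_eq_0)
  have cop: "coprime M p" using prime_imp_coprime[OF p ndv] by (simp add: ac_simps)
  have "M dvd p * vsum D W i" using sumeq dv M_def by simp
  hence dW: "M dvd vsum D W i" using coprime_dvd_mult_right_iff[OF cop] by simp
  have dU: "M dvd vsum D U i" using dv M_def by simp
  have ph1: "phi D p r U (r - 1) i = vsum D W i div M"
    unfolding phi_def using r1 WU M_def by simp
  have ph0: "phi D p r U 0 i = vsum D U i div M"
    unfolding phi_def M_def by simp
  obtain a where a: "vsum D W i = M * a" using dW by blast
  obtain b where b: "vsum D U i = M * b" using dU by blast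
  have "M * (p * a) = M * (b + vsum D (psi p U) i)" using sumeq a b
    by (simp add: algebra_simps)
  hence "p * a = b + vsum D (psi p U) i" using M0 by simp
  thus ?thesis using ph1 ph0 a b M0 by simp
qed

lemma exch:
  assumes mi: "(r, U) \<in> MI n D p" and mi': "(r', U') \<in> MI n D p" and p: "prime p"
    and e1: "phi D p r U (r - 1) = phi D p r' U' (r' - 1)"
    and e0: "phi D p r U 0 = phi D p r' U' 0"
  shows "weight D (psi p U) \<le> weight D (psi p U')"
proof -
  have m: "minimal n D p r U" using mi by (simp add: MI_def)
  have e: "inE n D p r U" using mi by (simp add: MI_def minimal_def)
  have e': "inE n D p r' U'" using mi' by (simp add: MI_def minimal_def)
  have p2: "p \<ge> 2" using p prime_ge_2_nat by blast
  have r1: "r \<ge> 1" using e by (simp add: inE_def)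
  obtain s where rs: "r = Suc s" using r1 by (cases r) auto
  have vs: "vsum D (psi p U) i = vsum D (psi p U') i" if "i < n" for i
    using psi_rel[OF mi p that] psi_rel[OF mi' p that] e1 e0 by simp
  define U2 where "U2 = (\<lambda>d. p * (U d div p) + U' d mod p)"
  have pt: "U2 d + U d mod p = U d + U' d mod p" for d
  proof -
    have h: "p * (U d div p) + U d mod p = U d" by (rule mult_div_mod_eq)
    show ?thesis unfolding U2_def using h by linarith
  qed
  have inE2: "inE n D p r U2"
    unfolding inE_def
  proof (intro conjI ballI allI impI)
    show "1 \<le> r" by (rule r1)
  next
    fix d assume d: "d \<in> D"
    have "U d \<le> p^r - 1" using e d by (simp add: inE_def)
    moreover have "p^r = p * p^s" using rs by simp
    moreover have "p^r > 0" using p2 by simp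
    ultimately have "U d < p * p^s" by linarith
    hence "U d div p < p^s" using less_mult_imp_div_less[of "U d" "p^s" p] by (simp add: mult.commute)
    hence "U d div p + 1 \<le> p^s" by simp
    hence "p * (U d div p + 1) \<le> p * p^s" by (rule mult_le_mono2)
    hence "p * (U d div p) + p \<le> p * p^s" by (simp add: distrib_left)
    moreover have "U' d mod p < p" using p2 by simp
    ultimately have "U2 d < p^r" unfolding U2_def using rs by simp
    thus "U2 d \<le> p^r - 1" by simp
  next
    fix d assume d: "d \<notin> D"
    thus "U2 d = 0" using e e' by (simp add: inE_def U2_def)
  next
    fix i assume i: "i < n"
    have "vsum D U2 i + vsum D (psi p U) i = vsum D U i + vsum D (psi p U') i"
      unfolding vsum_def psi_def
      by (simp add: sum.distrib[symmetric] distrib_right[symmetric] pt)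
    hence eqv: "vsum D U2 i = vsum D U i" using vs[OF i] by simp
    show "(p^r - 1) dvd vsum D U2 i" using e i eqv by (simp add: inE_def)
    show "0 < vsum D U2 i" using e i eqv by (simp add: inE_def)
  qed
  have ds: "digsum p (U2 d) + U d mod p = digsum p (U d) + U' d mod p" for d
    using digsum_pq[OF p2, of "U' d mod p" "U d div p"] digsum_step[OF p2, of "U d"] p2
    unfolding U2_def by simp
  have "sp p D U2 + weight D (psi p U) = sp p D U + weight D (psi p U')"
    unfolding sp_def weight_def psi_def
    by (simp add: sum.distrib[symmetric] ds)
  moreover have "sp p D U \<le> sp p D U2" by (rule min_le[OF m inE2 p])
  ultimately show ?thesis by simp
qed

theorem lemma2p15:
  fixes n p :: nat and D :: "(nat \<Rightarrow> nat) set" and e e' :: "nat \<Rightarrow> nat"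
  assumes "finite D"
    and "\<forall>d\<in>D. \<forall>i\<ge>n. d i = 0"
    and "\<forall>i<n. \<exists>d\<in>D. d i \<noteq> 0"
    and "prime p"
    and "e \<in> Sigma_p n D p" and "e' \<in> Sigma_p n D p"
    and "Vset n D p e e' \<noteq> {}"
  shows "\<forall>V\<in>Vset n D p e e'. \<forall>V'\<in>Vset n D p e e'. weight D V = weight D V'"
proof (intro ballI)
  fix V V' assume V: "V \<in> Vset n D p e e'" and V': "V' \<in> Vset n D p e e'"
  obtain r U where a: "V = psi p U" "(r, U) \<in> MI n D p" "phi D p r U (r - 1) = e" "phi D p r U 0 = e'"
    using V unfolding Vset_def by blast
  obtain r' U' where b: "V' = psi p U'" "(r', U') \<in> MI n D p" "phi D p r' U' (r' - 1) = e" "phi D p r' U' 0 = e'"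
    using V' unfolding Vset_def by blast
  have "weight D V \<le> weight D V'" using exch[OF a(2) b(2) assms(4)] a b by simp
  moreover have "weight D V' \<le> weight D V" using exch[OF b(2) a(2) assms(4)] a b by simp
  ultimately show "weight D V = weight D V'" by simp
qed

end
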